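(* Let $R\in\mathcal{RS}_n$ and let $S=\mathrm{Ctr}(R)$ be the corresponding sticky tree. Suppose that the leaf $f$ is the certificate of an internal node $u$ of positive depth in $R$, and let $v$ be the parent of $f$. Let $u',v'$ be the nodes of $S$ corresponding to $u,v$. Then $v'$ is the certificate of $u'$ in $S$.
   Context: Plane trees: a plane tree is a rooted tree in which the children of every node are linearly ordered (left to right); the root has depth $0$, a child of a node of depth $d$ has depth $d+1$; leaves are nodes without children, internal nodes have at least one child. The prefix order is: the root, followed by the prefix order of the subtree of its leftmost child, then of its second child, and so on. $R_u$ (or $S_u$) denotes the subtree rooted at $u$. Sticky trees: a sticky tree is a plane tree $S$ with node set $V$ and a labeling $\ell:V\to\mathbb{N}$ such that: (1) every node $u$ of depth $d$ has $0\le\ell(u)\le d$; (2) every node $u$ of depth $d>0$ has some $v\in S_u$ (possibly $v=u$) with $\ell(v)<d$; (3) for every node $u$ of depth $d$, if some $v\in S_u$ has $\ell(v)=d$, then every node of $S_u$ (including $u$) preceding $v$ in prefix order has label at least $d$. The certificate of a non-root node $u$ of depth $d$ in a sticky tree is the first node, in prefix order, of $S_u$ whose label is $<d$. Decorated trees: a decorated tree is a plane tree $R$ with an integer labeling $\ell$ defined only on its leaves such that: (1') for every leaf $f$ whose parent has depth $d$, $-1\le\ell(f)\le d-1$; (2') every internal node $u$ of depth $d>0$ has a descendant leaf $f$ with $\ell(f)<d-1$; (3') for every node $t$ of depth $d$ and every child $u$ of $t$, if some leaf $f$ of $R_u$ has $\ell(f)=d$, then every leaf of $R_u$ preceding $f$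 in prefix order has label at least $d$. The certificate of an internal node $u$ of depth $d>0$ in a decorated tree is the first leaf, in prefix order, of $R_u$ with label $<d-1$. $\mathcal{RS}_n$ is the set of decorated trees with $n+1$ internal nodes and $n+1$ leaves in which every internal node has a leaf as its first child. The map $\mathrm{Ctr}$: for $R\in\mathcal{RS}_n$, $\mathrm{Ctr}(R)$ is obtained by deleting all leaves of $R$, each remaining (formerly internal) node $w$ receiving label $\ell(f)+1$ where $f$ is the first child of $w$ in $R$; the nodes of $\mathrm{Ctr}(R)$ thus correspond to the internal nodes of $R$. $\mathrm{Ctr}(R)$ is a sticky tree. *)

theory Defs
  imports Main
begin

text \<open>A node is addressed by its path from the root: the list of child indices
(0 = leftmost child). The root is the empty path; the depth of a node is the length of
its path.\<close>

datatype ptree = Node "ptree list"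

fun children :: "ptree \<Rightarrow> ptree list" where
  "children (Node ts) = ts"

fun valid :: "ptree \<Rightarrow> nat list \<Rightarrow> bool" where
  "valid t [] = True"
| "valid (Node ts) (i # p) = (i < length ts \<and> valid (ts ! i) p)"

definition nodes :: "ptree \<Rightarrow> nat list set" where
  "nodes t = {p. valid t p}"

fun subtree :: "ptree \<Rightarrow> nat list \<Rightarrow> ptree" where
  "subtree t [] = t"
| "subtree (Node ts) (i # p) = (if i < length ts then subtree (ts ! i) p else Node [])"

definition is_leaf :: "ptree \<Rightarrow> nat list \<Rightarrow> bool" where
  "is_leaf t p \<longleftrightarrow> p \<in> nodes t \<and> children (subtree t p) = []"

definition is_internal :: "ptree \<Rightarrow> nat list \<Rightarrow> bool" where
  "is_internal t p \<longleftrightarrow> p \<in> nodes t \<and> children (subtree t p) \<noteq> []"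

definition leaves :: "ptree \<Rightarrow> nat list set" where
  "leaves t = {p. is_leaf t p}"

definition internals :: "ptree \<Rightarrow> nat list set" where
  "internals t = {p. is_internal t p}"

definition sub_nodes :: "ptree \<Rightarrow> nat list \<Rightarrow> nat list set" where
  "sub_nodes t u = {p \<in> nodes t. \<exists>s. p = u @ s}"

definition pre_lt :: "nat list \<Rightarrow> nat list \<Rightarrow> bool" where
  "pre_lt p q \<longleftrightarrow> (\<exists>s. s \<noteq> [] \<and> q = p @ s) \<or>
     (\<exists>c i j r s. i < j \<and> p = c @ i # r \<and> q = c @ j # s)"

definition decorated :: "ptree \<Rightarrow> (nat list \<Rightarrow> int) \<Rightarrow> bool" where
  "decorated R l \<longleftrightarrow>
     \<comment> \<open>(1') leaf f whose parent has depth d = length f - 1\<close>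
     (\<forall>f \<in> leaves R. f \<noteq> [] \<longrightarrow> -1 \<le> l f \<and> l f \<le> int (length f) - 2) \<and>
     \<comment> \<open>(2') every internal node of positive depth d has a descendant leaf with label < d - 1\<close>
     (\<forall>u \<in> internals R. length u > 0 \<longrightarrow>
        (\<exists>f \<in> leaves R \<inter> sub_nodes R u. l f < int (length u) - 1)) \<and>
     \<comment> \<open>(3') node t of depth d, child u of t\<close>
     (\<forall>t \<in> nodes R. \<forall>u \<in> nodes R. u \<noteq> [] \<and> butlast u = t \<longrightarrow>
        (\<forall>f \<in> leaves R \<inter> sub_nodes R u. l f = int (length t) \<longrightarrow>
           (\<forall>g \<in> leaves R \<inter> sub_nodes R u. pre_lt g f \<longrightarrow> l g \<ge> int (length t))))"

definition RS :: "nat \<Rightarrow> (ptree \<times> (nat list \<Rightarrow> int)) set" where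
  "RS n = {(R, l). decorated R l \<and> card (internals R) = n + 1 \<and> card (leaves R) = n + 1 \<and>
             (\<forall>w \<in> internals R. is_leaf R (w @ [0]))}"

definition dec_cert :: "ptree \<Rightarrow> (nat list \<Rightarrow> int) \<Rightarrow> nat list \<Rightarrow> nat list \<Rightarrow> bool" where
  "dec_cert R l u f \<longleftrightarrow> f \<in> leaves R \<inter> sub_nodes R u \<and> l f < int (length u) - 1 \<and>
     (\<forall>g \<in> leaves R \<inter> sub_nodes R u. pre_lt g f \<longrightarrow> l g \<ge> int (length u) - 1)"

definition sticky_cert :: "ptree \<Rightarrow> (nat list \<Rightarrow> nat) \<Rightarrow> nat list \<Rightarrow> nat list \<Rightarrow> bool" where
  "sticky_cert S l u v \<longleftrightarrow> v \<in> sub_nodes S u \<and> l v < length u \<and>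
     (\<forall>w \<in> sub_nodes S u. pre_lt w v \<longrightarrow> l w \<ge> length u)"

fun leafT :: "ptree \<Rightarrow> bool" where
  "leafT (Node ts) = (ts = [])"

function ctr :: "ptree \<Rightarrow> ptree" where
  "ctr (Node ts) = Node (map ctr (filter (\<lambda>t. \<not> leafT t) ts))"
  by pat_completeness auto
termination
  by (relation "measure size") (auto intro: size_list_estimation' less_Suc_eq_le[THEN iffD2])

text \<open>Correspondence of nodes: an internal node of R (path p) corresponds to the node of
Ctr(R) obtained by renumbering, at each step, the child index among internal siblings.\<close>
fun ctr_pos :: "ptree \<Rightarrow> nat list \<Rightarrow> nat list" where
  "ctr_pos t [] = []"
| "ctr_pos (Node ts) (i # p) =
     (if i < length ts then length (filter (\<lambda>t. \<not> leafT t) (take i ts)) # ctr_pos (ts ! i) p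
      else [])"

definition ctr_label :: "ptree \<Rightarrow> (nat list \<Rightarrow> int) \<Rightarrow> nat list \<Rightarrow> nat" where
  "ctr_label R l p' = nat (l (inv_into (internals R) (ctr_pos R) p' @ [0]) + 1)"

end

theory Submission
  imports Defs
begin

lemma pre_lt_Nil1[simp]: "pre_lt [] q \<longleftrightarrow> q \<noteq> []"
  unfolding pre_lt_def by auto

lemma pre_lt_Nil2[simp]: "\<not> pre_lt p []"
  unfolding pre_lt_def by auto

lemma pre_lt_Cons[simp]: "pre_lt (i#p) (j#q) \<longleftrightarrow> i < j \<or> (i = j \<and> pre_lt p q)"
proof
  assume "pre_lt (i#p) (j#q)"
  then consider (a) s where "s \<noteq> []" "j#q = (i#p) @ s"
    | (b) c a b r s where "a < b" "i#p = c @ a # r" "j#q = c @ b # s"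
    unfolding pre_lt_def by blast
  then show "i < j \<or> (i = j \<and> pre_lt p q)"
  proof cases
    case a then show ?thesis unfolding pre_lt_def by auto
  next
    case b
    show ?thesis
    proof (cases c)
      case Nil then show ?thesis using b by auto
    next
      case (Cons x c')
      then show ?thesis using b unfolding pre_lt_def by auto
    qed
  qed
next
  assume "i < j \<or> (i = j \<and> pre_lt p q)"
  then show "pre_lt (i#p) (j#q)"
  proof
    assume "i < j" then show ?thesis unfolding pre_lt_def
      by (metis append_Nil)
  next
    assume h: "i = j \<and> pre_lt p q"
    then consider (a) s where "s \<noteq> []" "q = p @ s"
    | (b) c a b r s where "a < b" "p = c @ a # r" "q = c @ b # s"
    unfolding pre_lt_def by blast
    then show ?thesis
    proof cases
      case a then show ?thesis using h unfolding pre_lt_def by auto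
    next
      case b then show ?thesis using h unfolding pre_lt_def
        by (metis append_Cons)
    qed
  qed
qed

lemma pre_lt_snoc0: "pre_lt w v \<Longrightarrow> pre_lt (w@[0]) (v@[0])"
proof (induction w arbitrary: v)
  case Nil then show ?case by (cases v) auto
next
  case (Cons a w) then show ?case by (cases v) auto
qed

definition good :: "ptree \<Rightarrow> nat list \<Rightarrow> bool" where
  "good t p \<longleftrightarrow> valid t p \<and> \<not> leafT (subtree t p)"

lemma leafT_children: "leafT t \<longleftrightarrow> children t = []"
  by (cases t) auto

lemma internal_good: "is_internal t p \<longleftrightarrow> good t p"
  unfolding is_internal_def good_def nodes_def by (auto simp: leafT_children)

lemma good_Nil[simp]: "good t [] \<longleftrightarrow> \<not> leafT t"
  by (simp add: good_def)

lemma good_nonleaf: "valid s p \<Longrightarrow> \<not> leafT (subtree s p) \<Longrightarrow> \<not> leafT s"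
  by (cases s; cases p) auto

lemma good_Cons[simp]: "good (Node ts) (i#p) \<longleftrightarrow> i < length ts \<and> \<not> leafT (ts!i) \<and> good (ts!i) p"
  unfolding good_def using good_nonleaf by auto

lemma good_append: "good t (p@s) \<Longrightarrow> good t p"
proof (induction p arbitrary: t)
  case Nil then show ?case using good_nonleaf unfolding good_def by auto
next
  case (Cons a p) then show ?case by (cases t) auto
qed

lemma filter_take_mono: "a \<le> b \<Longrightarrow> length (filter P (take a xs)) \<le> length (filter P (take b xs))"
proof -
  assume "a \<le> b"
  then obtain k where "b = a + k" using le_Suc_ex by blast
  then show ?thesis by (simp add: take_add)
qed

lemma filter_take_strict: "i < k \<Longrightarrow> i < length xs \<Longrightarrow> P (xs!i) \<Longrightarrow>
   length (filter P (take i xs)) < length (filter P (take k xs))"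
proof -
  assume a: "i < k" "i < length xs" "P (xs!i)"
  have "length (filter P (take (Suc i) xs)) = Suc (length (filter P (take i xs)))"
    using a by (simp add: take_Suc_conv_app_nth)
  moreover have "length (filter P (take (Suc i) xs)) \<le> length (filter P (take k xs))"
    using a by (intro filter_take_mono) auto
  ultimately show ?thesis by simp
qed

lemma filter_take_inj: "i < length xs \<Longrightarrow> j < length xs \<Longrightarrow> P (xs!i) \<Longrightarrow> P (xs!j) \<Longrightarrow>
   length (filter P (take i xs)) = length (filter P (take j xs)) \<Longrightarrow> i = j"
  by (metis filter_take_strict linorder_neqE_nat less_irrefl)

lemma filter_nth_ex: "j < length (filter P xs) \<Longrightarrow>
  \<exists>i<length xs. P (xs!i) \<and> length (filter P (take i xs)) = j \<and> filter P xs ! j = xs ! i"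
proof (induction xs arbitrary: j)
  case Nil then show ?case by simp
next
  case (Cons x xs)
  show ?case
  proof (cases "P x")
    case True
    show ?thesis
    proof (cases j)
      case 0 then show ?thesis using True by (intro exI[of _ 0]) auto
    next
      case (Suc j')
      then obtain i where "i<length xs" "P (xs!i)" "length (filter P (take i xs)) = j'" "filter P xs ! j' = xs ! i"
        using Cons True by auto
      then show ?thesis using True Suc by (intro exI[of _ "Suc i"]) auto
    qed
  next
    case False
    then obtain i where "i<length xs" "P (xs!i)" "length (filter P (take i xs)) = j" "filter P xs ! j = xs ! i"
      using Cons by auto
    then show ?thesis using False by (intro exI[of _ "Suc i"]) auto
  qed
qed

lemma ctr_pos_good: "good t p \<Longrightarrow> valid (ctr t) (ctr_pos t p) \<and> subtree (ctr t) (ctr_pos t p) = ctr (subtree t p)"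
proof (induction p arbitrary: t)
  case Nil then show ?case by simp
next
  case (Cons i p)
  obtain ts where t: "t = Node ts" by (cases t)
  let ?P = "\<lambda>t. \<not> leafT t"
  have h: "i < length ts" "?P (ts!i)" "good (ts!i) p" using Cons.prems t by auto
  have j: "length (filter ?P (take i ts)) < length (filter ?P ts)"
    using filter_take_strict[of i "length ts" ts ?P] h by simp
  have e: "filter ?P ts ! length (filter ?P (take i ts)) = ts ! i"
  proof -
    have "ts = take i ts @ ts!i # drop (Suc i) ts" using h(1) by (simp add: id_take_nth_drop)
    then have "filter ?P ts = filter ?P (take i ts) @ ts!i # filter ?P (drop (Suc i) ts)"
      using h(2) by (metis filter.simps(2) filter_append)
    then show ?thesis by (simp add: nth_append)
  qed
  show ?case using Cons.IH[OF h(3)] h j e t by simp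
qed

lemma ctr_pos_length: "valid t p \<Longrightarrow> length (ctr_pos t p) = length p"
proof (induction p arbitrary: t)
  case Nil then show ?case by simp
next
  case (Cons i p) then show ?case by (cases t) auto
qed

lemma ctr_pos_append: "valid t p \<Longrightarrow> ctr_pos t (p@s) = ctr_pos t p @ ctr_pos (subtree t p) s"
proof (induction p arbitrary: t)
  case Nil then show ?case by simp
next
  case (Cons i p) then show ?case by (cases t) auto
qed

lemma ctr_pos_inj: "good t p \<Longrightarrow> good t q \<Longrightarrow> ctr_pos t p = ctr_pos t q \<Longrightarrow> p = q"
proof (induction p arbitrary: t q)
  case Nil then show ?case by (cases t; cases q) auto
next
  case (Cons i p)
  obtain ts where t: "t = Node ts" by (cases t)
  obtain j q' where q: "q = j#q'" using Cons.prems t by (cases q) auto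
  have "i = j" using Cons.prems t q filter_take_inj[of i ts j "\<lambda>t. \<not> leafT t"] by auto
  then show ?case using Cons.prems Cons.IH t q by auto
qed

lemma ctr_pos_surj: "valid (ctr t) q \<Longrightarrow> \<not> leafT t \<Longrightarrow> \<exists>p. good t p \<and> ctr_pos t p = q"
proof (induction q arbitrary: t)
  case Nil then show ?case by (intro exI[of _ "[]"]) auto
next
  case (Cons j q)
  obtain ts where t: "t = Node ts" by (cases t)
  let ?P = "\<lambda>t. \<not> leafT t"
  have j: "j < length (filter ?P ts)" and v: "valid (ctr (filter ?P ts ! j)) q"
    using Cons.prems t by auto
  obtain i where i: "i<length ts" "?P (ts!i)" "length (filter ?P (take i ts)) = j" "filter ?P ts ! j = ts ! i"
    using filter_nth_ex[OF j] by blast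
  obtain p where "good (ts!i) p" "ctr_pos (ts!i) p = q" using Cons.IH[of "ts!i"] v i by auto
  then show ?case using i t by (intro exI[of _ "i#p"]) auto
qed

lemma ctr_pos_pre_lt: "good t w \<Longrightarrow> good t v \<Longrightarrow> pre_lt (ctr_pos t w) (ctr_pos t v) \<Longrightarrow> pre_lt w v"
proof (induction w arbitrary: t v)
  case Nil then show ?case by (cases t; cases v) auto
next
  case (Cons i w)
  obtain ts where t: "t = Node ts" by (cases t)
  obtain j v' where v: "v = j#v'" using Cons.prems t by (cases v) auto
  let ?P = "\<lambda>t. \<not> leafT t"
  have hi: "i < length ts" "?P (ts!i)" "good (ts!i) w" and hj: "j < length ts" "?P (ts!j)" "good (ts!j) v'"
    using Cons.prems t v by auto
  have p: "length (filter ?P (take i ts)) < length (filter ?P (take j ts)) \<or>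
     (length (filter ?P (take i ts)) = length (filter ?P (take j ts)) \<and> pre_lt (ctr_pos (ts!i) w) (ctr_pos (ts!j) v'))"
    using Cons.prems(3) t v hi hj by simp
  then show ?case
  proof
    assume "length (filter ?P (take i ts)) < length (filter ?P (take j ts))"
    then have "i < j" using filter_take_mono[of j i ?P ts] by (meson not_le)
    then show ?thesis using v by simp
  next
    assume a: "length (filter ?P (take i ts)) = length (filter ?P (take j ts)) \<and> pre_lt (ctr_pos (ts!i) w) (ctr_pos (ts!j) v')"
    then have "i = j" using filter_take_inj[of i ts j ?P] hi hj by auto
    then show ?thesis using a Cons.IH[of "ts!i" v'] hi hj v by auto
  qed
qed


theorem mainTheorem8:
  fixes n :: nat and R :: ptree and l :: "nat list \<Rightarrow> int" and u f :: "nat list"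
  assumes "(R, l) \<in> RS n"
    and "u \<in> internals R" and "length u > 0"
    and "dec_cert R l u f"
  shows "sticky_cert (ctr R) (ctr_label R l) (ctr_pos R u) (ctr_pos R (butlast f))"
proof -
  have dec: "decorated R l" and ci: "card (internals R) = n + 1" and cl: "card (leaves R) = n + 1"
    and fl: "\<forall>w \<in> internals R. is_leaf R (w @ [0])"
    using assms(1) unfolding RS_def by auto
  have fini: "finite (internals R)" using ci card.infinite by fastforce
  have finl: "finite (leaves R)" using cl card.infinite by fastforce
  have inj0: "inj_on (\<lambda>w. w @ [0]) (internals R)" by (auto simp: inj_on_def)
  have sub0: "(\<lambda>w. w @ [0]) ` internals R \<subseteq> leaves R" using fl unfolding leaves_def by auto
  have img: "(\<lambda>w. w @ [0]) ` internals R = leaves R"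
    using card_subset_eq[OF finl sub0] card_image[OF inj0] ci cl by simp
  have fcert: "f \<in> leaves R" "f \<in> sub_nodes R u" "l f < int (length u) - 1"
    and fmin: "\<forall>g \<in> leaves R \<inter> sub_nodes R u. pre_lt g f \<longrightarrow> l g \<ge> int (length u) - 1"
    using assms(4) unfolding dec_cert_def by auto
  obtain v where vI: "v \<in> internals R" and fv: "f = v @ [0]" using img fcert(1) by auto
  have bf: "butlast f = v" using fv by simp
  obtain s where fs: "f = u @ s" using fcert(2) unfolding sub_nodes_def by auto
  have "s \<noteq> []"
  proof
    assume "s = []"
    then have "f = u" using fs by simp
    then show False using fcert(1) assms(2) unfolding leaves_def internals_def is_leaf_def is_internal_def by auto
  qed
  then have vu: "v = u @ butlast s" using fs fv by (metis append_butlast_last_id butlast_append butlast_snoc)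
  have gu: "good R u" and gv: "good R v" using assms(2) vI internal_good unfolding internals_def by auto
  have validu: "valid R u" using gu good_def by auto
  have injc: "inj_on (ctr_pos R) (internals R)"
    using ctr_pos_inj unfolding inj_on_def internals_def internal_good by blast
  have lab: "\<And>w. w \<in> internals R \<Longrightarrow> ctr_label R l (ctr_pos R w) = nat (l (w @ [0]) + 1)"
    unfolding ctr_label_def using inv_into_f_f[OF injc] by simp
  have Rnl: "\<not> leafT R" using good_append[of R "[]" u] gu by simp
  let ?u' = "ctr_pos R u"
  have c1: "ctr_pos R v \<in> sub_nodes (ctr R) ?u'"
    using ctr_pos_good[OF gv] ctr_pos_append[OF validu, of "butlast s"] vu
    unfolding sub_nodes_def nodes_def by auto
  have fne: "f \<noteq> []" using fs assms(3) by auto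
  have lfge: "-1 \<le> l f" using dec fcert(1) fne unfolding decorated_def by auto
  have c2: "ctr_label R l (ctr_pos R v) < length ?u'"
    using lab[OF vI] fv fcert(3) lfge ctr_pos_length[OF validu] assms(3) by simp
  have c3: "ctr_label R l w' \<ge> length ?u'" if w': "w' \<in> sub_nodes (ctr R) ?u'" "pre_lt w' (ctr_pos R v)" for w'
  proof -
    obtain s' where ws: "w' = ?u' @ s'" and wv: "valid (ctr R) w'" using w'(1) unfolding sub_nodes_def nodes_def by auto
    obtain w where gw: "good R w" and cw: "ctr_pos R w = w'" using ctr_pos_surj[OF wv Rnl] by auto
    have vw: "valid R w" using gw good_def by auto
    have lw: "length w \<ge> length u" using ws cw ctr_pos_length[OF vw] ctr_pos_length[OF validu] by simp
    define w0 where "w0 = take (length u) w"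
    define w1 where "w1 = drop (length u) w"
    have ww: "w = w0 @ w1" unfolding w0_def w1_def by simp
    have g0: "good R w0" using good_append gw ww by metis
    have v0: "valid R w0" using g0 good_def by auto
    have l0: "length w0 = length u" using lw unfolding w0_def by simp
    have "ctr_pos R w = ctr_pos R w0 @ ctr_pos (subtree R w0) w1" using ctr_pos_append[OF v0] ww by simp
    then have "ctr_pos R w0 = ?u'" using cw ws ctr_pos_length[OF v0] ctr_pos_length[OF validu] l0
      by (metis append_eq_append_conv)
    then have "w0 = u" using ctr_pos_inj[OF g0 gu] by simp
    then have wu: "w = u @ w1" using ww by simp
    have pw: "pre_lt w v" using ctr_pos_pre_lt[OF gw gv] cw w'(2) by simp
    have wI: "w \<in> internals R" using gw internal_good unfolding internals_def by auto
    have gl: "w @ [0] \<in> leaves R" using fl wI unfolding leaves_def by auto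
    then have gs: "w @ [0] \<in> sub_nodes R u" using wu unfolding sub_nodes_def leaves_def is_leaf_def by auto
    have "pre_lt (w @ [0]) f" using pre_lt_snoc0[OF pw] fv by simp
    then have "l (w @ [0]) \<ge> int (length u) - 1" using fmin gl gs by auto
    then show ?thesis using lab[OF wI] cw ctr_pos_length[OF validu] by simp
  qed
  show ?thesis unfolding sticky_cert_def bf using c1 c2 c3 by blast
qed

end
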